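(* Let $\mathbf x_1,\dots,\mathbf x_n\in\mathbb C^N$ be orthonormal with $n\le N$, $\mathbf X=[\mathbf x_1\ \cdots\ \mathbf x_n]$, $\mathbf Y=[\mathrm{Re}(\mathbf X)\ \ \mathrm{Im}(\mathbf X)]\in\mathbb R^{N\times 2n}$ and $\mathbf A=\mathbf X^T\mathbf X\mathbf X^H\mathbf X^*$. Then the $2n$ eigenvalues of $\mathbf Y^T\mathbf Y$ are $$\Big\{\tfrac{1+\sqrt{\lambda_k(\mathbf A)}}{2},\ \tfrac{1-\sqrt{\lambda_k(\mathbf A)}}{2}\ :\ k=1,\dots,n\Big\}.$$
   Context: $^*$ denotes entrywise conjugation; $\lambda_k(\mathbf A)$ are the eigenvalues of the Hermitian positive semidefinite matrix $\mathbf A$. *)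

theory Defs
  imports "Jordan_Normal_Form.Matrix" "Jordan_Normal_Form.Char_Poly" "HOL-Library.Multiset"
begin

text \<open>M is the multiset of eigenvalues (with algebraic multiplicity) of the square matrix A,
  i.e. the characteristic polynomial of A splits as the product of (x - a) over a in M.\<close>
definition is_eigenvalue_mset :: "'a :: comm_ring_1 mat \<Rightarrow> 'a multiset \<Rightarrow> bool" where
  "is_eigenvalue_mset A M \<longleftrightarrow> char_poly A = prod_mset (image_mset (\<lambda>a. [:- a, 1:]) M)"

definition mat_conj :: "complex mat \<Rightarrow> complex mat" where
  "mat_conj X = map_mat cnj X"

definition mat_herm :: "complex mat \<Rightarrow> complex mat" where
  "mat_herm X = transpose_mat (map_mat cnj X)"

definition re_im_mat :: "complex mat \<Rightarrow> real mat" where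
  "re_im_mat X = mat (dim_row X) (2 * dim_col X)
     (\<lambda>(i, j). if j < dim_col X then Re (X $$ (i, j)) else Im (X $$ (i, j - dim_col X)))"

end

theory Submission
  imports Defs
begin

definition Tm :: "nat \<Rightarrow> complex mat" where
 "Tm n = mat (2*n) (2*n) (\<lambda>(b,j). if j<n then (if b=j then 1 else 0) + (if b=j+n then -\<i> else 0)
     else (if b = j-n then 1 else 0) + (if b=j then \<i> else 0))"

definition Wm :: "complex mat \<Rightarrow> nat \<Rightarrow> complex mat" where
 "Wm X n = mat (dim_row X) (2*n) (\<lambda>(i,j). if j<n then cnj (X$$(i,j)) else X$$(i,j-n))"

lemma YT_W: assumes X: "X \<in> carrier_mat N n"
  shows "map_mat complex_of_real (re_im_mat X) * Tm n = Wm X n"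
proof (rule eq_matI)
  show "dim_row (map_mat complex_of_real (re_im_mat X) * Tm n) = dim_row (Wm X n)"
    using X by (simp add: re_im_mat_def Wm_def)
  show "dim_col (map_mat complex_of_real (re_im_mat X) * Tm n) = dim_col (Wm X n)"
    using X by (simp add: Tm_def Wm_def)
  fix i j assume i: "i < dim_row (Wm X n)" and j: "j < dim_col (Wm X n)"
  have iN: "i < N" and j2: "j < 2*n" using i j X by (auto simp: Wm_def)
  have "(map_mat complex_of_real (re_im_mat X) * Tm n) $$ (i,j)
     = (\<Sum>b<2*n. complex_of_real (re_im_mat X $$ (i,b)) * Tm n $$ (b,j))"
    using iN j2 X by (simp add: re_im_mat_def Tm_def scalar_prod_def lessThan_atLeast0)
  also have "\<dots> = Wm X n $$ (i,j)"
  proof (cases "j < n")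
    case True
    have "(\<Sum>b<2*n. complex_of_real (re_im_mat X $$ (i,b)) * Tm n $$ (b,j))
      = (\<Sum>b<2*n. (if b = j then complex_of_real (re_im_mat X $$ (i,b)) else 0)
                 + (if b = j+n then - \<i> * complex_of_real (re_im_mat X $$ (i,b)) else 0))"
      using True by (intro sum.cong refl) (auto simp: Tm_def)
    also have "\<dots> = complex_of_real (re_im_mat X $$ (i,j)) - \<i> * complex_of_real (re_im_mat X $$ (i,j+n))"
      using True by (simp add: sum.distrib)
    also have "\<dots> = Wm X n $$ (i,j)"
      using True iN X by (simp add: re_im_mat_def Wm_def complex_eq_iff)
    finally show ?thesis .
  next
    case False
    have "(\<Sum>b<2*n. complex_of_real (re_im_mat X $$ (i,b)) * Tm n $$ (b,j))
      = (\<Sum>b<2*n. (if b = j-n then complex_of_real (re_im_mat X $$ (i,b)) else 0)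
                 + (if b = j then \<i> * complex_of_real (re_im_mat X $$ (i,b)) else 0))"
      using False j2 by (intro sum.cong refl) (auto simp: Tm_def)
    also have "\<dots> = complex_of_real (re_im_mat X $$ (i,j-n)) + \<i> * complex_of_real (re_im_mat X $$ (i,j))"
      using False j2 by (simp add: sum.distrib)
    also have "\<dots> = Wm X n $$ (i,j)"
      using False j2 iN X by (simp add: re_im_mat_def Wm_def complex_eq_iff less_diff_conv2)
    finally show ?thesis .
  qed
  finally show "(map_mat complex_of_real (re_im_mat X) * Tm n) $$ (i,j) = Wm X n $$ (i,j)" .
qed

lemma herm_mult: assumes A: "A \<in> carrier_mat a b" and B: "B \<in> carrier_mat b c"
  shows "mat_herm (A * B) = mat_herm B * mat_herm A"
  by (rule eq_matI, insert A B, auto simp: mat_herm_def scalar_prod_def cnj_sum mult.commute intro!: sum.cong)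

lemma herm_carrier[simp]: "A \<in> carrier_mat a b \<Longrightarrow> mat_herm A \<in> carrier_mat b a"
  by (auto simp: mat_herm_def)

lemma K_herm: assumes X: "X \<in> carrier_mat N n"
  shows "map_mat complex_of_real (transpose_mat (re_im_mat X) * re_im_mat X)
    = mat_herm (map_mat complex_of_real (re_im_mat X)) * map_mat complex_of_real (re_im_mat X)"
  by (rule eq_matI, insert X, auto simp: mat_herm_def scalar_prod_def re_im_mat_def)

lemma sum_T_col1: assumes "j < n"
  shows "(\<Sum>b<2*n. cnj (Tm n $$ (b,j)) * f b) = f j + \<i> * f (j+n)"
proof -
  have "(\<Sum>b<2*n. cnj (Tm n $$ (b,j)) * f b) = (\<Sum>b<2*n. (if b = j then f b else 0) + (if b = j+n then \<i> * f b else 0))"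
    using assms by (intro sum.cong refl) (auto simp: Tm_def)
  also have "\<dots> = f j + \<i> * f (j+n)" using assms by (simp add: sum.distrib)
  finally show ?thesis .
qed

lemma sum_T_col2: assumes "\<not> j < n" "j < 2*n"
  shows "(\<Sum>b<2*n. cnj (Tm n $$ (b,j)) * f b) = f (j-n) - \<i> * f j"
proof -
  have "(\<Sum>b<2*n. cnj (Tm n $$ (b,j)) * f b) = (\<Sum>b<2*n. (if b = j-n then f b else 0) - (if b = j then \<i> * f b else 0))"
    using assms by (intro sum.cong refl) (auto simp: Tm_def)
  also have "\<dots> = f (j-n) - \<i> * f j" using assms by (simp add: sum_subtractf)
  finally show ?thesis .
qed

lemma QT: "((1/2) \<cdot>\<^sub>m mat_herm (Tm n)) * Tm n = 1\<^sub>m (2*n)"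
proof (rule eq_matI)
  fix j k assume "j < dim_row (1\<^sub>m (2*n) :: complex mat)" "k < dim_col (1\<^sub>m (2*n) :: complex mat)"
  hence j: "j < 2*n" and k: "k < 2*n" by auto
  have "(((1/2) \<cdot>\<^sub>m mat_herm (Tm n)) * Tm n) $$ (j,k) = (1/2) * (\<Sum>b<2*n. cnj (Tm n $$ (b,j)) * Tm n $$ (b,k))"
    using j k by (simp add: mat_herm_def Tm_def scalar_prod_def lessThan_atLeast0 sum_distrib_left)
  also have "\<dots> = 1\<^sub>m (2*n) $$ (j,k)"
  proof (cases "j < n")
    case True
    show ?thesis unfolding sum_T_col1[OF True] using True j k
      by (auto simp: Tm_def complex_eq_iff)
  next
    case False
    show ?thesis unfolding sum_T_col2[OF False j] using False j k
      by (auto simp: Tm_def complex_eq_iff)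
  qed
  finally show "(((1/2) \<cdot>\<^sub>m mat_herm (Tm n)) * Tm n) $$ (j,k) = 1\<^sub>m (2*n) $$ (j,k)" .
qed (auto simp: mat_herm_def Tm_def)

definition Gm :: "complex mat \<Rightarrow> nat \<Rightarrow> complex mat" where
 "Gm X n = mat (2*n) (2*n) (\<lambda>(j,k). if j<n then (if k<n then (if j=k then 1/2 else 0) else (1/2) * (transpose_mat X * X)$$(j,k-n))
    else (if k<n then (1/2) * cnj ((transpose_mat X * X)$$(j-n,k)) else (if j=k then 1/2 else 0)))"

lemma orth_sum: assumes X: "X \<in> carrier_mat N n" and U: "mat_herm X * X = 1\<^sub>m n"
  and a: "a < n" and b: "b < n"
  shows "(\<Sum>i<N. cnj (X$$(i,a)) * X$$(i,b)) = (if a = b then 1 else 0)"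
proof -
  have "(mat_herm X * X) $$ (a,b) = (\<Sum>i<N. cnj (X$$(i,a)) * X$$(i,b))"
    using X a b by (simp add: mat_herm_def scalar_prod_def lessThan_atLeast0)
  thus ?thesis using U a b by simp
qed

lemma WW: assumes X: "X \<in> carrier_mat N n" and U: "mat_herm X * X = 1\<^sub>m n"
  shows "(1/2) \<cdot>\<^sub>m (mat_herm (Wm X n) * Wm X n) = Gm X n"
proof (rule eq_matI)
  fix j k assume "j < dim_row (Gm X n)" "k < dim_col (Gm X n)"
  hence j: "j < 2*n" and k: "k < 2*n" by (auto simp: Gm_def)
  have e: "((1/2) \<cdot>\<^sub>m (mat_herm (Wm X n) * Wm X n)) $$ (j,k) = (1/2) * (\<Sum>i<N. cnj (Wm X n $$ (i,j)) * Wm X n $$ (i,k))"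
    using j k X by (simp add: mat_herm_def Wm_def scalar_prod_def lessThan_atLeast0)
  show "((1/2) \<cdot>\<^sub>m (mat_herm (Wm X n) * Wm X n)) $$ (j,k) = Gm X n $$ (j,k)"
  proof (cases "j < n")
    case jT: True
    show ?thesis
    proof (cases "k < n")
      case kT: True
      have "(\<Sum>i<N. cnj (Wm X n $$ (i,j)) * Wm X n $$ (i,k)) = cnj (\<Sum>i<N. cnj (X$$(i,j)) * X$$(i,k))"
        using jT kT X by (auto simp: Wm_def cnj_sum mult.commute intro!: sum.cong)
      thus ?thesis unfolding e using orth_sum[OF X U jT kT] jT kT by (simp add: Gm_def)
    next
      case kF: False
      have "(\<Sum>i<N. cnj (Wm X n $$ (i,j)) * Wm X n $$ (i,k)) = (transpose_mat X * X)$$(j,k-n)"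
        using jT kF k X by (auto simp: Wm_def scalar_prod_def lessThan_atLeast0 intro!: sum.cong)
      thus ?thesis unfolding e using jT kF k by (simp add: Gm_def)
    qed
  next
    case jF: False
    have jn: "j - n < n" using j jF by arith
    show ?thesis
    proof (cases "k < n")
      case kT: True
      have "(\<Sum>i<N. cnj (Wm X n $$ (i,j)) * Wm X n $$ (i,k)) = cnj ((transpose_mat X * X)$$(j-n,k))"
        using jF kT j jn X by (auto simp: Wm_def scalar_prod_def lessThan_atLeast0 cnj_sum intro!: sum.cong)
      thus ?thesis unfolding e using jF kT j by (simp add: Gm_def)
    next
      case kF: False
      have kn: "k - n < n" using k kF by arith
      have "(\<Sum>i<N. cnj (Wm X n $$ (i,j)) * Wm X n $$ (i,k)) = (\<Sum>i<N. cnj (X$$(i,j-n)) * X$$(i,k-n))"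
        using jF kF j k X by (auto simp: Wm_def intro!: sum.cong)
      thus ?thesis unfolding e orth_sum[OF X U jn kn] using jF kF j k by (auto simp: Gm_def)
    qed
  qed
qed (insert X, auto simp: Gm_def Wm_def mat_herm_def)

lemma Tm_carrier[simp]: "Tm n \<in> carrier_mat (2*n) (2*n)" by (simp add: Tm_def)
lemma re_im_carrier: "X \<in> carrier_mat N n \<Longrightarrow> re_im_mat X \<in> carrier_mat N (2*n)"
  by (simp add: re_im_mat_def)
lemma Gm_carrier[simp]: "Gm X n \<in> carrier_mat (2*n) (2*n)" by (simp add: Gm_def)

lemma assoc5: assumes "A \<in> carrier_mat m m" "B \<in> carrier_mat m m" "C \<in> carrier_mat m m"
  "D \<in> carrier_mat m m" "E \<in> carrier_mat m m"
  shows "A * (B * C * D) * E = (A * B) * C * (D * E)"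
  using assms by (simp add: assoc_mult_mat[of _ m m _ m _ m])

lemma similar_K_G: assumes X: "X \<in> carrier_mat N n" and U: "mat_herm X * X = 1\<^sub>m n"
  shows "similar_mat (map_mat complex_of_real (transpose_mat (re_im_mat X) * re_im_mat X)) (Gm X n)"
proof -
  define Yc where "Yc = map_mat complex_of_real (re_im_mat X)"
  define T where "T = Tm n"
  define Q where "Q = (1/2) \<cdot>\<^sub>m mat_herm T"
  have Yc: "Yc \<in> carrier_mat N (2*n)" using re_im_carrier[OF X] by (simp add: Yc_def)
  have T: "T \<in> carrier_mat (2*n) (2*n)" by (simp add: T_def)
  have Q: "Q \<in> carrier_mat (2*n) (2*n)" by (simp add: Q_def T_def)
  have QT: "Q * T = 1\<^sub>m (2*n)" using QT by (simp add: Q_def T_def)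
  have TQ: "T * Q = 1\<^sub>m (2*n)" by (rule mat_mult_left_right_inverse[OF Q T QT])
  have K: "map_mat complex_of_real (transpose_mat (re_im_mat X) * re_im_mat X) = mat_herm Yc * Yc"
    using K_herm[OF X] by (simp add: Yc_def)
  have W: "Yc * T = Wm X n" using YT_W[OF X] by (simp add: Yc_def T_def)
  have G: "Q * (mat_herm Yc * Yc) * T = Gm X n"
  proof -
    have Hy: "mat_herm Yc \<in> carrier_mat (2*n) N" using Yc by simp
    have Ht: "mat_herm T \<in> carrier_mat (2*n) (2*n)" using T by simp
    have a1: "mat_herm T * (mat_herm Yc * Yc) = (mat_herm T * mat_herm Yc) * Yc"
      using assoc_mult_mat[OF Ht Hy Yc] by simp
    have a2: "(mat_herm T * mat_herm Yc) * Yc * T = (mat_herm T * mat_herm Yc) * (Yc * T)"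
      using assoc_mult_mat[OF mult_carrier_mat[OF Ht Hy] Yc T] by simp
    have "Q * (mat_herm Yc * Yc) * T = (1/2) \<cdot>\<^sub>m (mat_herm T * (mat_herm Yc * Yc)) * T"
      unfolding Q_def using mult_smult_assoc_mat[OF Ht mult_carrier_mat[OF Hy Yc]] by simp
    also have "\<dots> = (1/2) \<cdot>\<^sub>m (mat_herm T * (mat_herm Yc * Yc) * T)"
      using mult_smult_assoc_mat[OF mult_carrier_mat[OF Ht mult_carrier_mat[OF Hy Yc]] T] by simp
    also have "\<dots> = (1/2) \<cdot>\<^sub>m ((mat_herm T * mat_herm Yc) * (Yc * T))"
      using a1 a2 by simp
    also have "\<dots> = (1/2) \<cdot>\<^sub>m (mat_herm (Yc * T) * (Yc * T))"
      using herm_mult[OF Yc T] by simp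
    also have "\<dots> = Gm X n" using WW[OF X U] W by simp
    finally show ?thesis .
  qed
  have K': "mat_herm Yc * Yc \<in> carrier_mat (2*n) (2*n)" using Yc by (meson herm_carrier mult_carrier_mat)
  have "T * Gm X n * Q = T * (Q * (mat_herm Yc * Yc) * T) * Q" unfolding G ..
  also have "\<dots> = (T * Q) * (mat_herm Yc * Yc) * (T * Q)"
    by (rule assoc5[OF T Q K' T Q])
  also have "\<dots> = mat_herm Yc * Yc" unfolding TQ using K'
    using left_mult_one_mat right_mult_one_mat by (metis mult_carrier_mat one_carrier_mat)
  finally have eq: "map_mat complex_of_real (transpose_mat (re_im_mat X) * re_im_mat X) = T * Gm X n * Q"
    using K by simp
  show ?thesis
    by (rule similar_matI[of _ _ T Q "2*n"], insert T Q Yc TQ QT eq re_im_carrier[OF X], auto)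
qed

lemma A_eq: assumes X: "X \<in> carrier_mat N n"
  shows "transpose_mat X * X * mat_herm X * mat_conj X = (transpose_mat X * X) * map_mat cnj (transpose_mat X * X)"
proof -
  have "map_mat cnj (transpose_mat X * X) = mat_herm X * mat_conj X"
    by (rule eq_matI, insert X, auto simp: mat_herm_def mat_conj_def scalar_prod_def cnj_sum intro!: sum.cong)
  moreover have "transpose_mat X * X * mat_herm X * mat_conj X = (transpose_mat X * X) * (mat_herm X * mat_conj X)"
    by (rule assoc_mult_mat[of _ n n _ N _ n], insert X, auto simp: mat_conj_def)
  ultimately show ?thesis by simp
qed

lemma charG: assumes X: "X \<in> carrier_mat N n"
  shows "poly (char_poly (Gm X n)) x = (1/4)^n * poly (char_poly (transpose_mat X * X * mat_herm X * mat_conj X)) (4*(x-1/2)^2)"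
proof -
  define B where "B = transpose_mat X * X"
  define Bc where "Bc = map_mat cnj B"
  define a where "a = x - 1/2"
  have B: "B \<in> carrier_mat n n" using X by (simp add: B_def)
  have Bc: "Bc \<in> carrier_mat n n" using B by (simp add: Bc_def)
  have AB: "transpose_mat X * X * mat_herm X * mat_conj X = B * Bc"
    using A_eq[OF X] by (simp add: B_def Bc_def)
  have G: "Gm X n \<in> carrier_mat (2*n) (2*n)" by simp
  have "poly (char_poly (Gm X n)) x = det (- char_matrix (Gm X n) x)"
    by (rule char_poly_matrix[OF G])
  also have "- char_matrix (Gm X n) x = four_block_mat (a \<cdot>\<^sub>m 1\<^sub>m n) ((-1/2) \<cdot>\<^sub>m B) ((-1/2) \<cdot>\<^sub>m Bc) (a \<cdot>\<^sub>m 1\<^sub>m n)"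
    by (rule eq_matI, insert B Bc, auto simp: char_matrix_def Gm_def a_def B_def Bc_def)
  also have "det \<dots> = det ((a \<cdot>\<^sub>m 1\<^sub>m n) * (a \<cdot>\<^sub>m 1\<^sub>m n) - ((-1/2) \<cdot>\<^sub>m B) * ((-1/2) \<cdot>\<^sub>m Bc))"
  proof (rule det_four_block_mat[of _ n])
    show "(- 1 / 2) \<cdot>\<^sub>m Bc * (a \<cdot>\<^sub>m 1\<^sub>m n) = a \<cdot>\<^sub>m 1\<^sub>m n * ((- 1 / 2) \<cdot>\<^sub>m Bc)"
    proof -
      have C: "(- 1 / 2) \<cdot>\<^sub>m Bc \<in> carrier_mat n n" using Bc by simp
      have "(- 1 / 2) \<cdot>\<^sub>m Bc * (a \<cdot>\<^sub>m 1\<^sub>m n) = a \<cdot>\<^sub>m ((- 1 / 2) \<cdot>\<^sub>m Bc)"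
        using mult_smult_distrib[OF C one_carrier_mat[of n], of a] right_mult_one_mat[OF C] by simp
      moreover have "a \<cdot>\<^sub>m 1\<^sub>m n * ((- 1 / 2) \<cdot>\<^sub>m Bc) = a \<cdot>\<^sub>m ((- 1 / 2) \<cdot>\<^sub>m Bc)"
        using mult_smult_assoc_mat[OF one_carrier_mat[of n] C, of a] left_mult_one_mat[OF C] by simp
      ultimately show ?thesis by simp
    qed
  qed (insert B Bc, auto)
  also have "(a \<cdot>\<^sub>m 1\<^sub>m n) * (a \<cdot>\<^sub>m 1\<^sub>m n) - ((-1/2) \<cdot>\<^sub>m B) * ((-1/2) \<cdot>\<^sub>m Bc)
     = (1/4) \<cdot>\<^sub>m (- char_matrix (B * Bc) (4*a^2))"
  proof -
    have e1: "(a \<cdot>\<^sub>m 1\<^sub>m n) * (a \<cdot>\<^sub>m 1\<^sub>m n) = (a*a) \<cdot>\<^sub>m 1\<^sub>m n"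
    proof -
      have C: "a \<cdot>\<^sub>m 1\<^sub>m n \<in> carrier_mat n n" by simp
      have "(a \<cdot>\<^sub>m 1\<^sub>m n) * (a \<cdot>\<^sub>m 1\<^sub>m n) = a \<cdot>\<^sub>m (a \<cdot>\<^sub>m 1\<^sub>m n)"
        using mult_smult_distrib[OF C one_carrier_mat[of n], of a] right_mult_one_mat[OF C] by simp
      also have "\<dots> = (a*a) \<cdot>\<^sub>m 1\<^sub>m n" by (rule eq_matI, auto)
      finally show ?thesis .
    qed
    have e2: "((-1/2) \<cdot>\<^sub>m B) * ((-1/2) \<cdot>\<^sub>m Bc) = (1/4) \<cdot>\<^sub>m (B * Bc)"
      using B Bc by (simp add: mult_smult_distrib[of _ n n] mult_smult_assoc_mat[of _ n n], intro eq_matI, auto)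
    show ?thesis unfolding e1 e2
      by (rule eq_matI, insert B Bc, auto simp: char_matrix_def power2_eq_square)
  qed
  also have "det ((1/4) \<cdot>\<^sub>m (- char_matrix (B * Bc) (4*a^2))) = (1/4)^n * det (- char_matrix (B * Bc) (4*a^2))"
    using B Bc by (simp add: char_matrix_def)
  also have "det (- char_matrix (B * Bc) (4*a^2)) = poly (char_poly (B * Bc)) (4*a^2)"
    using char_poly_matrix[of "B*Bc" n] B Bc by simp
  finally show ?thesis unfolding AB a_def .
qed

lemma lin: "poly [:-a,1:] x = x - a" for a x :: "'a::comm_ring_1" by simp

lemma poly_prod_lin: "poly (prod_mset (image_mset (\<lambda>a. [:-a,1:]) M)) x = prod_mset (image_mset (\<lambda>a. x - a) M)"
  for x :: "'a::comm_ring_1"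
proof (induction M)
  case (add a M)
  have "poly (prod_mset (image_mset (\<lambda>a. [:-a,1:]) (add_mset a M))) x = poly [:-a,1:] x * poly (prod_mset (image_mset (\<lambda>a. [:-a,1:]) M)) x"
    by (simp only: image_mset_add_mset prod_mset.add_mset poly_mult)
  also have "\<dots> = (x - a) * prod_mset (image_mset (\<lambda>a. x - a) M)" by (simp only: lin add)
  finally show ?case by simp
qed simp

lemma degree_prod_lin: "degree (prod_mset (image_mset (\<lambda>a. [:-a,(1::'a::idom):]) M)) = size M"
proof (induction M)
  case (add a M)
  have "prod_mset (image_mset (\<lambda>a. [:-a,(1::'a):]) M) \<noteq> 0"
    by (auto simp: prod_mset_zero_iff)
  hence "degree ([:-a,1:] * prod_mset (image_mset (\<lambda>a. [:-a,(1::'a):]) M)) = degree [:-a,(1::'a):] + degree (prod_mset (image_mset (\<lambda>a. [:-a,(1::'a):]) M))"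
    by (intro degree_mult_eq) auto
  thus ?case using add by simp
qed auto

lemma poly_target: "poly (prod_mset (image_mset (\<lambda>a. [:-a,1:]) (\<Sum>\<^sub># (image_mset (\<lambda>\<mu>. {# (1 + sqrt \<mu>) / 2, (1 - sqrt \<mu>) / 2 #}) M)))) r
   = prod_mset (image_mset (\<lambda>\<mu>. (r - (1 + sqrt \<mu>) / 2) * (r - (1 - sqrt \<mu>) / 2)) M)"
  unfolding poly_prod_lin
  by (induction M) (simp_all add: mult.assoc)

lemma prod_quarter: assumes "\<forall>\<mu>\<in>#M. \<mu> \<ge> 0"
  shows "prod_mset (image_mset (\<lambda>\<mu>. (r - (1 + sqrt \<mu>) / 2) * (r - (1 - sqrt \<mu>) / 2)) M)
     = (1/4)^size M * prod_mset (image_mset (\<lambda>\<mu>. 4*(r-1/2)^2 - \<mu>) M)"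
  using assms
proof (induction M)
  case (add a M)
  have a: "a \<ge> 0" using add by auto
  have gen: "(r - (1 + s) / 2) * (r - (1 - s) / 2) = (1/4) * (4*(r-1/2)^2 - s^2)" for s :: real
    by (simp add: field_simps power2_eq_square)
  have "(r - (1 + sqrt a) / 2) * (r - (1 - sqrt a) / 2) = (1/4) * (4*(r-1/2)^2 - (sqrt a)^2)"
    by (rule gen)
  also have "(sqrt a)^2 = a" using a by simp
  finally have eq1: "(r - (1 + sqrt a) / 2) * (r - (1 - sqrt a) / 2) = (1/4) * (4*(r-1/2)^2 - a)" .
  have IH: "prod_mset (image_mset (\<lambda>\<mu>. (r - (1 + sqrt \<mu>) / 2) * (r - (1 - sqrt \<mu>) / 2)) M)
     = (1/4)^size M * prod_mset (image_mset (\<lambda>\<mu>. 4*(r-1/2)^2 - \<mu>) M)" using add by simp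
  show ?case
    apply (simp only: image_mset_add_mset prod_mset.add_mset size_add_mset power_Suc eq1 IH)
    apply (simp only: mult_ac)
    done
qed auto

lemma of_real_prod_mset: "complex_of_real (prod_mset (image_mset f M)) = prod_mset (image_mset (\<lambda>x. complex_of_real (f x)) M)"
  by (induction M) auto

lemma cnj_mult_self: "cnj z * z = complex_of_real ((cmod z)^2)"
  by (metis complex_norm_square mult.commute)

lemma eig_nonneg: assumes B: "B \<in> carrier_mat n n" and sym: "\<And>i k. i < n \<Longrightarrow> k < n \<Longrightarrow> B $$ (i,k) = B $$ (k,i)"
  and ev: "eigenvalue (B * map_mat cnj B) (complex_of_real \<mu>)"
  shows "\<mu> \<ge> 0"
proof -
  define Bc where "Bc = map_mat cnj B"
  have Bc: "Bc \<in> carrier_mat n n" using B by (simp add: Bc_def)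
  from ev obtain v where v: "v \<in> carrier_vec n" "v \<noteq> 0\<^sub>v n" "(B * Bc) *\<^sub>v v = complex_of_real \<mu> \<cdot>\<^sub>v v"
    unfolding eigenvalue_def eigenvector_def Bc_def using B by auto
  define w where "w = Bc *\<^sub>v v"
  have w: "w \<in> carrier_vec n" using Bc v by (simp add: w_def)
  have Bw: "B *\<^sub>v w = complex_of_real \<mu> \<cdot>\<^sub>v v" using v B Bc by (simp add: w_def)
  have wk: "w $ k = (\<Sum>i<n. Bc $$ (k,i) * v $ i)" if "k < n" for k
    using that Bc v by (simp add: w_def scalar_prod_def lessThan_atLeast0)
  define S where "S = (\<Sum>i<n. cnj (v $ i) * (B *\<^sub>v w) $ i)"
  have "S = (\<Sum>i<n. cnj (v $ i) * (\<Sum>k<n. B $$ (i,k) * w $ k))"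
    unfolding S_def using B w by (intro sum.cong refl) (simp add: scalar_prod_def lessThan_atLeast0)
  also have "\<dots> = (\<Sum>i<n. \<Sum>k<n. cnj (v $ i) * B $$ (i,k) * w $ k)"
    by (simp add: sum_distrib_left mult.assoc)
  also have "\<dots> = (\<Sum>k<n. \<Sum>i<n. cnj (v $ i) * B $$ (i,k) * w $ k)"
    by (rule sum.swap)
  also have "\<dots> = (\<Sum>k<n. (\<Sum>i<n. cnj (v $ i) * B $$ (i,k)) * w $ k)"
    by (simp add: sum_distrib_right)
  also have "\<dots> = (\<Sum>k<n. cnj (w $ k) * w $ k)"
  proof (intro sum.cong refl)
    fix k assume k: "k \<in> {..<n}"
    have "(\<Sum>i<n. cnj (v $ i) * B $$ (i,k)) = cnj (\<Sum>i<n. Bc $$ (k,i) * v $ i)"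
      using k B sym by (auto simp: Bc_def cnj_sum mult.commute intro!: sum.cong)
    thus "(\<Sum>i<n. cnj (v $ i) * B $$ (i,k)) * w $ k = cnj (w $ k) * w $ k" using wk k by simp
  qed
  also have "\<dots> = complex_of_real (\<Sum>k<n. (cmod (w $ k))^2)"
    by (simp only: cnj_mult_self of_real_sum)
  finally have S1: "S = complex_of_real (\<Sum>k<n. (cmod (w $ k))^2)" .
  have "S = complex_of_real \<mu> * (\<Sum>i<n. cnj (v $ i) * v $ i)"
    unfolding S_def Bw using v by (simp add: sum_distrib_left mult.left_commute)
  also have "\<dots> = complex_of_real (\<mu> * (\<Sum>i<n. (cmod (v $ i))^2))"
    by (simp only: cnj_mult_self of_real_sum of_real_mult)
  finally have S2: "S = complex_of_real (\<mu> * (\<Sum>i<n. (cmod (v $ i))^2))" .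
  from S1 S2 have eq: "\<mu> * (\<Sum>i<n. (cmod (v $ i))^2) = (\<Sum>k<n. (cmod (w $ k))^2)"
    using of_real_eq_iff[where 'a=complex] by metis
  from v obtain i where i: "i < n" "v $ i \<noteq> 0" by (metis eq_vecI carrier_vecD index_zero_vec(1) index_zero_vec(2))
  have "(cmod (v $ i))^2 \<le> (\<Sum>i<n. (cmod (v $ i))^2)"
    using i by (intro member_le_sum) auto
  moreover have "(cmod (v $ i))^2 > 0" using i by simp
  ultimately have pos: "(\<Sum>i<n. (cmod (v $ i))^2) > 0" by linarith
  have "(\<Sum>k<n. (cmod (w $ k))^2) \<ge> 0" by (intro sum_nonneg) auto
  note Q = this
  show ?thesis
  proof (rule ccontr)
    assume "\<not> \<mu> \<ge> 0"
    hence "\<mu> * (\<Sum>i<n. (cmod (v $ i))^2) < 0" using pos by (simp add: mult_neg_pos)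
    thus False using eq Q by linarith
  qed
qed

theorem lemma6:
  fixes N n :: nat and X :: "complex mat" and M :: "real multiset"
  assumes "X \<in> carrier_mat N n"
    and "n \<le> N"
    and "mat_herm X * X = 1\<^sub>m n"
    and "is_eigenvalue_mset (transpose_mat X * X * mat_herm X * mat_conj X) (image_mset complex_of_real M)"
  shows "is_eigenvalue_mset (transpose_mat (re_im_mat X) * re_im_mat X)
           (\<Sum>\<^sub># (image_mset (\<lambda>\<mu>. {# (1 + sqrt \<mu>) / 2, (1 - sqrt \<mu>) / 2 #}) M))"
proof -
  note X = assms(1) and U = assms(3)
  define A where "A = transpose_mat X * X * mat_herm X * mat_conj X"
  define B where "B = transpose_mat X * X"
  have B: "B \<in> carrier_mat n n" using X by (simp add: B_def)
  have AB: "A = B * map_mat cnj B" using A_eq[OF X] by (simp add: A_def B_def)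
  have A: "A \<in> carrier_mat n n" using AB B by simp
  have chA: "char_poly A = prod_mset (image_mset (\<lambda>a. [:-a,1:]) (image_mset complex_of_real M))"
    using assms(4) by (simp add: is_eigenvalue_mset_def A_def)
  have symB: "B $$ (i,k) = B $$ (k,i)" if "i < n" "k < n" for i k
    using that X by (auto simp: B_def scalar_prod_def mult.commute intro!: sum.cong)
  have nonneg: "\<forall>\<mu>\<in>#M. \<mu> \<ge> 0"
  proof
    fix \<mu> assume mu: "\<mu> \<in># M"
    have "poly (char_poly A) (complex_of_real \<mu>) = 0"
      unfolding chA poly_prod_lin using mu by (auto simp: prod_mset_zero_iff)
    hence "eigenvalue A (complex_of_real \<mu>)" using eigenvalue_root_char_poly[OF A] by simp
    thus "\<mu> \<ge> 0" using eig_nonneg[OF B symB] AB by simp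
  qed
  have sizeM: "size M = n"
  proof -
    have "degree (char_poly A) = n" using degree_monic_char_poly[OF A] by simp
    thus ?thesis unfolding chA degree_prod_lin by simp
  qed
  define K where "K = transpose_mat (re_im_mat X) * re_im_mat X"
  have K: "K \<in> carrier_mat (2*n) (2*n)" using re_im_carrier[OF X] by (simp add: K_def)
  define tgt where "tgt = prod_mset (image_mset (\<lambda>a. [:-a,1:]) (\<Sum>\<^sub># (image_mset (\<lambda>\<mu>. {# (1 + sqrt \<mu>) / 2, (1 - sqrt \<mu>) / 2 #}) M)))"
  have "poly (char_poly K) = poly tgt"
  proof
    fix r :: real
    have "complex_of_real (poly (char_poly K) r) = poly (map_poly complex_of_real (char_poly K)) (complex_of_real r)"
      by (simp add: of_real_hom.poly_map_poly)
    also have "map_poly complex_of_real (char_poly K) = char_poly (map_mat complex_of_real K)"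
      by (rule of_real_hom.char_poly_hom[OF K, symmetric])
    also have "char_poly (map_mat complex_of_real K) = char_poly (Gm X n)"
      using char_poly_similar[OF similar_K_G[OF X U]] by (simp add: K_def)
    also have "poly (char_poly (Gm X n)) (complex_of_real r) = (1/4)^n * poly (char_poly A) (4*(complex_of_real r-1/2)^2)"
      using charG[OF X] by (simp add: A_def)
    also have "\<dots> = complex_of_real ((1/4)^n * prod_mset (image_mset (\<lambda>\<mu>. 4*(r-1/2)^2 - \<mu>) M))"
      unfolding chA poly_prod_lin by (simp add: of_real_prod_mset multiset.map_comp o_def)
    also have "(1/4)^n * prod_mset (image_mset (\<lambda>\<mu>. 4*(r-1/2)^2 - \<mu>) M) = poly tgt r"
      unfolding tgt_def poly_target prod_quarter[OF nonneg] sizeM ..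
    finally show "poly (char_poly K) r = poly tgt r" by simp
  qed
  hence "char_poly K = tgt" by (simp add: poly_eq_poly_eq_iff)
  thus ?thesis by (simp add: is_eigenvalue_mset_def K_def tgt_def)
qed

end
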